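(* Assume $\mathcal S\subseteq\mathcal D$. Let $F\in\mathbb R^{d\times s}$, $H=BFC$, $\bar F=F\bar C$, $\bar H=\bar B\bar F$. For $i=1,\dots,s$ let $\phi_i(\bar H)=\bar H_{ii}$ and $\gamma_i(\bar H)=\sum_{j\neq i}|\bar H_{ij}|$. If $\phi_i(\bar H)+\gamma_i(\bar H)<2$ and $\phi_i(\bar H)-\gamma_i(\bar H)>0$ for all $i=1,\dots,s$, then: (i) every trajectory of $\bar e[k+1]=(I_s-\bar H)\bar e[k]$ converges to $0$ exponentially; (ii) the system $e[k+1]=(I_{2n}-H)e[k]$ is stable in the sense of Lyapunov; (iii) for every trajectory of $e[k+1]=(I_{2n}-H)e[k]$ and every $p\in\mathcal S$, the component $e_p[k]$ converges to $0$ exponentially.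
   Context: Standing setup. Let $n\ge 1$ and consider a radial distribution network modeled as a tree with root node $0$ (the substation), non-root nodes $\mathcal N=\{1,\dots,n\}$, and edge set $\mathcal L$; each edge $(i,j)\in\mathcal L$ has resistance $r_{ij}\in\mathbb R$ and reactance $x_{ij}\in\mathbb R$. For a node $i$, $\mathcal L_i$ denotes the set of edges on the unique path from node $0$ to node $i$. Define $R^0,X^0\in\mathbb R^{n\times n}$ by $R^0_{ij}=2\sum_{(w,t)\in\mathcal L_i\cap\mathcal L_j} r_{wt}$ and $X^0_{ij}=2\sum_{(w,t)\in\mathcal L_i\cap\mathcal L_j} x_{wt}$. Let $\mathcal D_1\subseteq\mathcal N$ (nodes with a DER) and $\mathcal S_1\subseteq\mathcal N$ (nodes with a sensor) be nonempty, listed in increasing order; let $\mathcal D_2=\{i+n: i\in\mathcal D_1\}$, $\mathcal S_2=\{i+n:i\in\mathcal S_1\}$, $\mathcal D=\mathcal D_1\cup\mathcal D_2$, $\mathcal S=\mathcal S_1\cup\mathcal S_2$ (subsets of $\{1,\dots,2n\}$, listed in increasing order), $d=|\mathcal D|$, $s=|\mathcal S|$, $\overline{\mathcal D}=\{1,\dots,2n\}\setminus\mathcal D$, $\overline{\mathcal S}=\{1,\dots,2n\}\setminus\mathcal S$. For an increasingly ordered set $\Omega=\{i_1,\dots,i_g\}\subseteq\{1,\dots,c\}$, let $\Gamma_c(\Omega)=[\mathfrak e_{i_1}\ \cdots\ \mathfrak e_{i_g}]\in\mathbb R^{c\times g}$, where $\mathfrak e_\omega$ is the $\omega$-th standard basis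 vector of $\mathbb R^c$. Set $T^d=\Gamma_n(\mathcal D_1)$, $R=R^0T^d$, $X=X^0T^d\in\mathbb R^{n\times d/2}$, $T^s=\Gamma_{2n}(\mathcal S)^\top\in\mathbb R^{s\times 2n}$, and $A=I_{2n}$, $B=\begin{bmatrix}X & R\\ -\tfrac12 R & \tfrac12 X\end{bmatrix}\in\mathbb R^{2n\times d}$, $C=T^s$. The system $\Sigma^1$ is $e[k+1]=Ae[k]+Bu[k]$, $y[k]=Ce[k]$ with state $e[k]\in\mathbb R^{2n}$, input $u[k]\in\mathbb R^d$, output $y[k]\in\mathbb R^s$. Define the permutation matrix $T=[\Gamma_{2n}(\mathcal S\cap\mathcal D),\ \Gamma_{2n}(\mathcal S\cap\overline{\mathcal D}),\ \Gamma_{2n}(\overline{\mathcal S}\cap\mathcal D),\ \Gamma_{2n}(\overline{\mathcal S}\cap\overline{\mathcal D})]\in\mathbb R^{2n\times 2n}$ (each intersection listed in increasing order) and $G=\Gamma_{2n}(\{1,\dots,s\})\in\mathbb R^{2n\times s}$. The reduced system $\Sigma^2$ has $\bar A=I_s$, $\bar B=G^\top T^{-1}B\in\mathbb R^{s\times d}$, $\bar C=CTG\in\mathbb R^{s\times s}$, and reduced state $\bar e=G^\top T^{-1}e\in\mathbb R^s$. *)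

theory Defs
  imports "Jordan_Normal_Form.Matrix" "Jordan_Normal_Form.Gauss_Jordan_Elimination"
begin

text \<open>Paper indices are 1-based; JNF matrix/vector indices are 0-based.
  Paper entry (i,j) of a matrix is JNF entry (i-1,j-1); paper component e_p is JNF e $ (p-1).
  Index sets (D1, S1, D, S, ...) are kept 1-based as in the paper.\<close>

text \<open>Radial network: rooted tree on nodes {0..n} with root 0, given by a parent map
  par; the edge entering node t (t in 1..n) is (par t, t).\<close>

definition is_rooted_tree :: "nat \<Rightarrow> (nat \<Rightarrow> nat) \<Rightarrow> bool" where
  "is_rooted_tree n par \<longleftrightarrow> (\<forall>i\<in>{1..n}. par i \<in> {0..n} \<and> (\<exists>k. (par ^^ k) i = 0))"

definition tree_edges :: "nat \<Rightarrow> (nat \<Rightarrow> nat) \<Rightarrow> (nat \<times> nat) set" where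
  "tree_edges n par = (\<lambda>t. (par t, t)) ` {1..n}"

definition path_nodes :: "(nat \<Rightarrow> nat) \<Rightarrow> nat \<Rightarrow> nat set" where
  "path_nodes par i = {(par ^^ k) i | k. \<forall>l\<le>k. (par ^^ l) i \<noteq> 0}"

definition path_edges :: "(nat \<Rightarrow> nat) \<Rightarrow> nat \<Rightarrow> (nat \<times> nat) set" where
  "path_edges par i = (\<lambda>t. (par t, t)) ` path_nodes par i"

definition R0 :: "nat \<Rightarrow> (nat \<Rightarrow> nat) \<Rightarrow> (nat \<Rightarrow> nat \<Rightarrow> real) \<Rightarrow> real mat" where
  "R0 n par r = mat n n (\<lambda>(i,j).
     2 * (\<Sum>(w,t)\<in>path_edges par (i+1) \<inter> path_edges par (j+1). r w t))"

definition Gamma :: "nat \<Rightarrow> nat set \<Rightarrow> real mat" where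
  "Gamma c \<Omega> = mat c (card \<Omega>) (\<lambda>(i,k). if i + 1 = sorted_list_of_set \<Omega> ! k then 1 else 0)"

definition hcat :: "real mat \<Rightarrow> real mat \<Rightarrow> real mat" where
  "hcat A B = mat (dim_row A) (dim_col A + dim_col B)
     (\<lambda>(i,j). if j < dim_col A then A $$ (i,j) else B $$ (i, j - dim_col A))"

definition shiftn :: "nat \<Rightarrow> nat set \<Rightarrow> nat set" where
  "shiftn n A = (\<lambda>i. i + n) ` A"

definition Dset :: "nat \<Rightarrow> nat set \<Rightarrow> nat set" where
  "Dset n D1 = D1 \<union> shiftn n D1"

definition Bmat :: "nat \<Rightarrow> (nat \<Rightarrow> nat) \<Rightarrow> (nat \<Rightarrow> nat \<Rightarrow> real) \<Rightarrow> (nat \<Rightarrow> nat \<Rightarrow> real)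
    \<Rightarrow> nat set \<Rightarrow> real mat" where
  "Bmat n par r x D1 =
    (let Td = Gamma n D1; R = R0 n par r * Td; X = R0 n par x * Td
     in four_block_mat X R ((-1/2) \<cdot>\<^sub>m R) ((1/2) \<cdot>\<^sub>m X))"

definition Cmat :: "nat \<Rightarrow> nat set \<Rightarrow> real mat" where
  "Cmat n S1 = transpose_mat (Gamma (2*n) (Dset n S1))"

definition Tmat :: "nat \<Rightarrow> nat set \<Rightarrow> nat set \<Rightarrow> real mat" where
  "Tmat n D1 S1 =
    (let D = Dset n D1; S = Dset n S1; U = {1..2*n}
     in hcat (Gamma (2*n) (S \<inter> D)) (hcat (Gamma (2*n) (S \<inter> (U - D)))
          (hcat (Gamma (2*n) ((U - S) \<inter> D)) (Gamma (2*n) ((U - S) \<inter> (U - D))))))"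

definition Gmat :: "nat \<Rightarrow> nat set \<Rightarrow> real mat" where
  "Gmat n S1 = Gamma (2*n) {1..card (Dset n S1)}"

definition Bbar :: "nat \<Rightarrow> (nat \<Rightarrow> nat) \<Rightarrow> (nat \<Rightarrow> nat \<Rightarrow> real) \<Rightarrow> (nat \<Rightarrow> nat \<Rightarrow> real)
    \<Rightarrow> nat set \<Rightarrow> nat set \<Rightarrow> real mat" where
  "Bbar n par r x D1 S1 =
     transpose_mat (Gmat n S1) * the (mat_inverse (Tmat n D1 S1)) * Bmat n par r x D1"

definition Cbar :: "nat \<Rightarrow> nat set \<Rightarrow> nat set \<Rightarrow> real mat" where
  "Cbar n D1 S1 = Cmat n S1 * Tmat n D1 S1 * Gmat n S1"

definition vnorm :: "real vec \<Rightarrow> real" where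
  "vnorm v = sqrt (\<Sum>i<dim_vec v. (v $ i)^2)"

definition is_traj :: "nat \<Rightarrow> real mat \<Rightarrow> (nat \<Rightarrow> real vec) \<Rightarrow> bool" where
  "is_traj m M z \<longleftrightarrow> (\<forall>k. z k \<in> carrier_vec m \<and> z (Suc k) = M *\<^sub>v z k)"

definition exp_conv_zero :: "(nat \<Rightarrow> real) \<Rightarrow> bool" where
  "exp_conv_zero f \<longleftrightarrow> (\<exists>c \<rho>. 0 \<le> \<rho> \<and> \<rho> < 1 \<and> (\<forall>k. \<bar>f k\<bar> \<le> c * \<rho> ^ k))"

definition lyapunov_stable :: "nat \<Rightarrow> real mat \<Rightarrow> bool" where
  "lyapunov_stable m M \<longleftrightarrow> (\<forall>\<epsilon>>0. \<exists>\<delta>>0. \<forall>z. is_traj m M z \<longrightarrow> vnorm (z 0) < \<delta>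
      \<longrightarrow> (\<forall>k. vnorm (z k) < \<epsilon>))"

end

theory Submission
  imports Defs "Jordan_Normal_Form.Determinant"
begin


definition L1 :: "real vec \<Rightarrow> real" where
  "L1 v = (\<Sum>i<dim_vec v. \<bar>v $ i\<bar>)"

lemma L1_nonneg: "0 \<le> L1 v" unfolding L1_def by (simp add: sum_nonneg)

lemma comp_le_L1: "i < dim_vec v \<Longrightarrow> \<bar>v $ i\<bar> \<le> L1 v"
  unfolding L1_def by (rule member_le_sum) auto

lemma comp_le_vnorm: "i < dim_vec v \<Longrightarrow> \<bar>v $ i\<bar> \<le> vnorm v"
proof -
  assume i: "i < dim_vec v"
  have "(v $ i)^2 \<le> (\<Sum>j<dim_vec v. (v $ j)^2)"
    by (rule member_le_sum) (use i in auto)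
  then have "sqrt ((v $ i)^2) \<le> vnorm v" unfolding vnorm_def
    using real_sqrt_le_mono by blast
  then show ?thesis by simp
qed

lemma L1_le_vnorm: "L1 v \<le> dim_vec v * vnorm v"
proof -
  have "L1 v \<le> (\<Sum>i<dim_vec v. vnorm v)" unfolding L1_def
    by (rule sum_mono) (auto intro: comp_le_vnorm)
  then show ?thesis by simp
qed

lemma vnorm_le_L1: "vnorm v \<le> L1 v"
proof -
  have "(\<Sum>j<dim_vec v. (v $ j)^2) \<le> (\<Sum>j<dim_vec v. \<bar>v $ j\<bar> * L1 v)"
  proof (rule sum_mono)
    fix j assume "j \<in> {..<dim_vec v}"
    then have "\<bar>v $ j\<bar> \<le> L1 v" by (auto intro: comp_le_L1)
    then have "\<bar>v $ j\<bar> * \<bar>v $ j\<bar> \<le> \<bar>v $ j\<bar> * L1 v" by (rule mult_left_mono) simp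
    moreover have "(v $ j)^2 = \<bar>v $ j\<bar> * \<bar>v $ j\<bar>" by (simp add: power2_eq_square)
    ultimately show "(v $ j)^2 \<le> \<bar>v $ j\<bar> * L1 v" by simp
  qed
  also have "\<dots> = L1 v * L1 v" unfolding L1_def by (simp add: sum_distrib_right)
  finally have "vnorm v \<le> sqrt (L1 v * L1 v)" unfolding vnorm_def using real_sqrt_le_mono by blast
  then show ?thesis using L1_nonneg[of v] by simp
qed

lemma L1_minus: "a \<in> carrier_vec m \<Longrightarrow> b \<in> carrier_vec m \<Longrightarrow> L1 (a - b) \<le> L1 a + L1 b"
  unfolding L1_def by (auto simp: sum.distrib[symmetric] intro!: sum_mono abs_triangle_ineq4)

definition mabs :: "real mat \<Rightarrow> real" where
  "mabs N = (\<Sum>i<dim_row N. \<Sum>j<dim_col N. \<bar>N $$ (i,j)\<bar>)"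

lemma entry_le_mabs: "i < dim_row N \<Longrightarrow> j < dim_col N \<Longrightarrow> \<bar>N $$ (i,j)\<bar> \<le> mabs N"
proof -
  assume i: "i < dim_row N" and j: "j < dim_col N"
  have "\<bar>N $$ (i,j)\<bar> \<le> (\<Sum>j<dim_col N. \<bar>N $$ (i,j)\<bar>)"
    by (rule member_le_sum) (use j in auto)
  also have "\<dots> \<le> mabs N" unfolding mabs_def
    by (rule member_le_sum) (use i in \<open>auto intro: sum_nonneg\<close>)
  finally show ?thesis .
qed

lemma mabs_nonneg: "0 \<le> mabs N" unfolding mabs_def by (simp add: sum_nonneg)

lemma mult_comp_bound:
  fixes N :: "real mat"
  assumes N: "N \<in> carrier_mat a b" and v: "v \<in> carrier_vec b" and i: "i < a"
  shows "\<bar>(N *\<^sub>v v) $ i\<bar> \<le> (\<Sum>j<b. \<bar>N $$ (i,j)\<bar> * \<bar>v $ j\<bar>)"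
proof -
  have "(N *\<^sub>v v) $ i = (\<Sum>j<b. N $$ (i,j) * v $ j)"
    using N v i by (simp add: scalar_prod_def lessThan_atLeast0)
  moreover have "\<bar>(\<Sum>j<b. N $$ (i,j) * v $ j)\<bar> \<le> (\<Sum>j<b. \<bar>N $$ (i,j) * v $ j\<bar>)" by (rule sum_abs)
  ultimately have "\<bar>(N *\<^sub>v v) $ i\<bar> \<le> (\<Sum>j<b. \<bar>N $$ (i,j) * v $ j\<bar>)" by simp
  then show ?thesis by (simp add: abs_mult)
qed

lemma L1_mult:
  assumes N: "N \<in> carrier_mat a b" and v: "v \<in> carrier_vec b"
  shows "L1 (N *\<^sub>v v) \<le> a * mabs N * L1 v"
proof -
  have "L1 (N *\<^sub>v v) = (\<Sum>i<a. \<bar>(N *\<^sub>v v) $ i\<bar>)" using N unfolding L1_def by simp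
  also have "\<dots> \<le> (\<Sum>i<a. mabs N * L1 v)"
  proof (rule sum_mono)
    fix i assume "i \<in> {..<a}"
    then have i: "i < a" by simp
    have "\<bar>(N *\<^sub>v v) $ i\<bar> \<le> (\<Sum>j<b. \<bar>N $$ (i,j)\<bar> * \<bar>v $ j\<bar>)" by (rule mult_comp_bound[OF N v i])
    also have "\<dots> \<le> (\<Sum>j<b. mabs N * \<bar>v $ j\<bar>)"
      by (rule sum_mono, rule mult_right_mono) (use N i in \<open>auto intro: entry_le_mabs\<close>)
    also have "\<dots> = mabs N * L1 v" using v unfolding L1_def by (simp add: sum_distrib_left)
    finally show "\<bar>(N *\<^sub>v v) $ i\<bar> \<le> mabs N * L1 v" .
  qed
  finally show ?thesis by simp
qed

lemma contraction:
  fixes A :: "real mat"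
  assumes A: "A \<in> carrier_mat s s" and rho: "0 \<le> \<rho>"
    and rows: "\<And>i. i < s \<Longrightarrow> (\<Sum>j<s. \<bar>A $$ (i,j)\<bar>) \<le> \<rho>"
    and z: "is_traj s A z"
  shows "i < s \<Longrightarrow> \<bar>z k $ i\<bar> \<le> \<rho> ^ k * L1 (z 0)"
proof (induction k arbitrary: i)
  case 0
  have "z 0 \<in> carrier_vec s" using z unfolding is_traj_def by auto
  then show ?case using 0 by (auto intro: comp_le_L1)
next
  case (Suc k)
  have zk: "z k \<in> carrier_vec s" using z unfolding is_traj_def by auto
  have "\<bar>z (Suc k) $ i\<bar> = \<bar>(A *\<^sub>v z k) $ i\<bar>" using z unfolding is_traj_def by auto
  also have "\<dots> \<le> (\<Sum>j<s. \<bar>A $$ (i,j)\<bar> * \<bar>z k $ j\<bar>)" by (rule mult_comp_bound[OF A zk Suc.prems])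
  also have "\<dots> \<le> (\<Sum>j<s. \<bar>A $$ (i,j)\<bar> * (\<rho> ^ k * L1 (z 0)))"
    by (rule sum_mono, rule mult_left_mono) (auto intro: Suc.IH)
  also have "\<dots> = (\<Sum>j<s. \<bar>A $$ (i,j)\<bar>) * (\<rho> ^ k * L1 (z 0))" by (simp add: sum_distrib_right)
  also have "\<dots> \<le> \<rho> * (\<rho> ^ k * L1 (z 0))"
    by (rule mult_right_mono) (use rows Suc.prems rho L1_nonneg in auto)
  finally show ?case by simp
qed

lemma L1_traj:
  fixes A :: "real mat"
  assumes A: "A \<in> carrier_mat s s" and rho: "0 \<le> \<rho>"
    and rows: "\<And>i. i < s \<Longrightarrow> (\<Sum>j<s. \<bar>A $$ (i,j)\<bar>) \<le> \<rho>"
    and z: "is_traj s A z"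
  shows "L1 (z k) \<le> s * \<rho> ^ k * L1 (z 0)"
proof -
  have "z k \<in> carrier_vec s" using z unfolding is_traj_def by auto
  then have "L1 (z k) = (\<Sum>i<s. \<bar>z k $ i\<bar>)" unfolding L1_def by auto
  also have "\<dots> \<le> (\<Sum>i<s. \<rho> ^ k * L1 (z 0))"
    by (rule sum_mono) (use contraction[OF A rho rows z] in auto)
  finally show ?thesis by simp
qed

lemma rowsum_bound:
  fixes H :: "real mat"
  assumes H: "H \<in> carrier_mat s s" and i: "i < s"
    and c: "H $$ (i,i) + (\<Sum>j\<in>{0..<s} - {i}. \<bar>H $$ (i,j)\<bar>) < 2"
           "H $$ (i,i) - (\<Sum>j\<in>{0..<s} - {i}. \<bar>H $$ (i,j)\<bar>) > 0"
  shows "(\<Sum>j<s. \<bar>(1\<^sub>m s - H) $$ (i,j)\<bar>) < 1"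
proof -
  have "(\<Sum>j<s. \<bar>(1\<^sub>m s - H) $$ (i,j)\<bar>) = (\<Sum>j\<in>{0..<s}. \<bar>(1\<^sub>m s - H) $$ (i,j)\<bar>)"
    by (simp add: lessThan_atLeast0)
  also have "\<dots> = \<bar>(1\<^sub>m s - H) $$ (i,i)\<bar> + (\<Sum>j\<in>{0..<s} - {i}. \<bar>(1\<^sub>m s - H) $$ (i,j)\<bar>)"
    by (rule sum.remove) (use i in auto)
  also have "(\<Sum>j\<in>{0..<s} - {i}. \<bar>(1\<^sub>m s - H) $$ (i,j)\<bar>) = (\<Sum>j\<in>{0..<s} - {i}. \<bar>H $$ (i,j)\<bar>)"
    by (rule sum.cong) (use H i in auto)
  also have "\<bar>(1\<^sub>m s - H) $$ (i,i)\<bar> = \<bar>1 - H $$ (i,i)\<bar>" using H i by simp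
  finally show ?thesis using c by linarith
qed

lemma exists_rho:
  fixes H :: "real mat"
  assumes H: "H \<in> carrier_mat s s" and s: "0 < s"
    and c: "\<forall>i<s. H $$ (i,i) + (\<Sum>j\<in>{0..<s} - {i}. \<bar>H $$ (i,j)\<bar>) < 2 \<and>
           H $$ (i,i) - (\<Sum>j\<in>{0..<s} - {i}. \<bar>H $$ (i,j)\<bar>) > 0"
  shows "\<exists>\<rho>. 0 \<le> \<rho> \<and> \<rho> < 1 \<and> (\<forall>i<s. (\<Sum>j<s. \<bar>(1\<^sub>m s - H) $$ (i,j)\<bar>) \<le> \<rho>)"
proof -
  define rs where "rs i = (\<Sum>j<s. \<bar>(1\<^sub>m s - H) $$ (i,j)\<bar>)" for i
  define \<rho> where "\<rho> = Max (rs ` {..<s})"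
  have fin: "finite (rs ` {..<s})" and ne: "rs ` {..<s} \<noteq> {}" using s by auto
  have "\<rho> \<in> rs ` {..<s}" unfolding \<rho>_def using Max_in[OF fin ne] .
  then obtain i0 where i0: "i0 < s" "\<rho> = rs i0" by auto
  have "rs i0 < 1" unfolding rs_def using rowsum_bound[OF H i0(1)] c i0(1) by blast
  moreover have "0 \<le> rs i0" unfolding rs_def by (simp add: sum_nonneg)
  moreover have "\<forall>i<s. rs i \<le> \<rho>" unfolding \<rho>_def using fin by auto
  ultimately show ?thesis using i0 unfolding rs_def by auto
qed

definition gmat :: "nat \<Rightarrow> nat list \<Rightarrow> nat \<Rightarrow> real mat" where
  "gmat c L k = mat c k (\<lambda>(i,j). if i + 1 = L ! j then 1 else 0)"

lemma gmatT_mult: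
  assumes v: "v \<in> carrier_vec c" and j: "j < k" and L: "L ! j \<in> {1..c}"
  shows "(transpose_mat (gmat c L k) *\<^sub>v v) $ j = v $ (L ! j - 1)"
proof -
  have "(transpose_mat (gmat c L k) *\<^sub>v v) $ j = (\<Sum>i\<in>{0..<c}. (if i + 1 = L ! j then 1 else 0) * v $ i)"
    using v j by (simp add: gmat_def scalar_prod_def)
  also have "\<dots> = (\<Sum>i\<in>{0..<c}. if i = L ! j - 1 then v $ i else 0)"
    by (rule sum.cong) (use L in auto)
  also have "\<dots> = v $ (L ! j - 1)" using L by (auto simp: sum.delta')
  finally show ?thesis .
qed

lemma core:
  fixes M :: "real mat" and m s :: nat and Ls :: "nat list"
  defines "P \<equiv> gmat m Ls s"
  assumes M: "M \<in> carrier_mat m s" and s: "0 < s" and m: "0 < m"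
    and Ls: "\<And>j. j < s \<Longrightarrow> Ls ! j \<in> {1..m}"
    and c: "\<forall>i<s. (transpose_mat P * M) $$ (i,i) + (\<Sum>j\<in>{0..<s} - {i}. \<bar>(transpose_mat P * M) $$ (i,j)\<bar>) < 2 \<and>
           (transpose_mat P * M) $$ (i,i) - (\<Sum>j\<in>{0..<s} - {i}. \<bar>(transpose_mat P * M) $$ (i,j)\<bar>) > 0"
  shows
    "(\<forall>eb. is_traj s (1\<^sub>m s - transpose_mat P * M) eb \<longrightarrow> exp_conv_zero (\<lambda>k. vnorm (eb k)))
     \<and> lyapunov_stable m (1\<^sub>m m - M * transpose_mat P)
     \<and> (\<forall>e. is_traj m (1\<^sub>m m - M * transpose_mat P) e
            \<longrightarrow> (\<forall>j<s. exp_conv_zero (\<lambda>k. e k $ (Ls ! j - 1))))"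
proof -
  define H where "H = transpose_mat P * M"
  have P: "P \<in> carrier_mat m s" unfolding P_def gmat_def by simp
  have PT: "transpose_mat P \<in> carrier_mat s m" using P by simp
  have H: "H \<in> carrier_mat s s" unfolding H_def using PT M by simp
  define A where "A = 1\<^sub>m s - H"
  have A: "A \<in> carrier_mat s s" unfolding A_def using H by (simp add: minus_carrier_mat)
  obtain \<rho> where rho: "0 \<le> \<rho>" "\<rho> < 1" and rows: "\<And>i. i < s \<Longrightarrow> (\<Sum>j<s. \<bar>A $$ (i,j)\<bar>) \<le> \<rho>"
    using exists_rho[OF H s] c unfolding A_def H_def by blast
  have part1: "exp_conv_zero (\<lambda>k. vnorm (eb k))" if eb: "is_traj s A eb" for eb
  proof -
    have "\<bar>vnorm (eb k)\<bar> \<le> (s * L1 (eb 0)) * \<rho> ^ k" for k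
    proof -
      have "0 \<le> vnorm (eb k)" unfolding vnorm_def by (simp add: sum_nonneg)
      then have "\<bar>vnorm (eb k)\<bar> \<le> L1 (eb k)" using vnorm_le_L1 by simp
      also have "\<dots> \<le> s * \<rho> ^ k * L1 (eb 0)" by (rule L1_traj[OF A rho(1) rows eb])
      finally show ?thesis by (simp add: algebra_simps)
    qed
    then show ?thesis unfolding exp_conv_zero_def using rho by blast
  qed
  define Full where "Full = 1\<^sub>m m - M * transpose_mat P"
  have MPT: "M * transpose_mat P \<in> carrier_mat m m" using M PT by simp
  have key: "transpose_mat P * Full = A * transpose_mat P"
  proof -
    have "transpose_mat P * Full = transpose_mat P * 1\<^sub>m m - transpose_mat P * (M * transpose_mat P)"
      unfolding Full_def by (rule mult_minus_distrib_mat[OF PT one_carrier_mat MPT])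
    also have "\<dots> = transpose_mat P - transpose_mat P * (M * transpose_mat P)" using PT by simp
    also have "transpose_mat P * (M * transpose_mat P) = H * transpose_mat P"
      unfolding H_def using PT M by (simp add: assoc_mult_mat[of _ s m _ s _ m])
    also have "transpose_mat P - H * transpose_mat P = 1\<^sub>m s * transpose_mat P - H * transpose_mat P"
      using PT by simp
    also have "\<dots> = A * transpose_mat P" unfolding A_def
      by (rule minus_mult_distrib_mat[symmetric, OF one_carrier_mat H PT])
    finally show ?thesis .
  qed
  have ytraj: "is_traj s A (\<lambda>k. transpose_mat P *\<^sub>v e k)" if e: "is_traj m Full e" for e
    unfolding is_traj_def
  proof
    fix k
    have ek: "e k \<in> carrier_vec m" using e unfolding is_traj_def by auto
    have "transpose_mat P *\<^sub>v e (Suc k) = transpose_mat P *\<^sub>v (Full *\<^sub>v e k)"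
      using e unfolding is_traj_def by auto
    also have "\<dots> = (transpose_mat P * Full) *\<^sub>v e k"
      by (rule assoc_mult_mat_vec[symmetric, OF PT _ ek]) (simp add: Full_def MPT minus_carrier_mat)
    also have "\<dots> = A *\<^sub>v (transpose_mat P *\<^sub>v e k)" unfolding key using A PT ek by simp
    finally have "transpose_mat P *\<^sub>v e (Suc k) = A *\<^sub>v (transpose_mat P *\<^sub>v e k)" .
    moreover have "transpose_mat P *\<^sub>v e k \<in> carrier_vec s" using PT by (intro carrier_vecI) simp
    ultimately show "transpose_mat P *\<^sub>v e k \<in> carrier_vec s \<and>
      transpose_mat P *\<^sub>v e (Suc k) = A *\<^sub>v (transpose_mat P *\<^sub>v e k)" by (rule conjI[rotated])
  qed
  have part3: "exp_conv_zero (\<lambda>k. e k $ (Ls ! j - 1))" if e: "is_traj m Full e" and j: "j < s" for e j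
  proof -
    let ?y = "\<lambda>k. transpose_mat P *\<^sub>v e k"
    have "\<bar>e k $ (Ls ! j - 1)\<bar> \<le> L1 (?y 0) * \<rho> ^ k" for k
    proof -
      have ek: "e k \<in> carrier_vec m" using e unfolding is_traj_def by auto
      have "e k $ (Ls ! j - 1) = ?y k $ j" unfolding P_def
        using gmatT_mult[OF ek j Ls[OF j]] by simp
      also have "\<bar>\<dots>\<bar> \<le> \<rho> ^ k * L1 (?y 0)" by (rule contraction[OF A rho(1) rows ytraj[OF e] j])
      finally show ?thesis by (simp add: algebra_simps)
    qed
    then show ?thesis unfolding exp_conv_zero_def using rho by blast
  qed
  define K where "K = 1 + m * mabs M * s * s / (1 - \<rho>)"
  have K1: "1 \<le> K" unfolding K_def using rho mabs_nonneg[of M] by simp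
  have bound: "L1 (e k) \<le> K * L1 (e 0)" if e: "is_traj m Full e" for e k
  proof -
    let ?y = "\<lambda>k. transpose_mat P *\<^sub>v e k"
    have ec: "e k \<in> carrier_vec m" for k using e unfolding is_traj_def by auto
    have yc: "?y k \<in> carrier_vec s" for k using mult_mat_vec_carrier[OF PT ec] .
    define W where "W = m * mabs M * (s * L1 (?y 0))"
    have W0: "0 \<le> W" unfolding W_def using mabs_nonneg[of M] L1_nonneg by simp
    have step: "L1 (e (Suc k)) \<le> L1 (e k) + W * \<rho> ^ k" for k
    proof -
      have "e (Suc k) = Full *\<^sub>v e k" using e unfolding is_traj_def by auto
      also have "\<dots> = e k - M *\<^sub>v ?y k" unfolding Full_def
        using ec[of k] MPT M PT by (simp add: minus_mult_distrib_mat_vec[of _ m m])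
      finally have "L1 (e (Suc k)) = L1 (e k - M *\<^sub>v ?y k)" by simp
      also have "\<dots> \<le> L1 (e k) + L1 (M *\<^sub>v ?y k)" by (rule L1_minus[OF ec]) (use M yc in simp)
      also have "L1 (M *\<^sub>v ?y k) \<le> m * mabs M * L1 (?y k)" by (rule L1_mult[OF M yc])
      also have "\<dots> \<le> m * mabs M * (s * \<rho> ^ k * L1 (?y 0))"
        by (rule mult_left_mono[OF L1_traj[OF A rho(1) rows ytraj[OF e]]]) (simp, intro mult_nonneg_nonneg of_nat_0_le_iff mabs_nonneg)
      finally show ?thesis unfolding W_def by (simp add: algebra_simps)
    qed
    have gs: "L1 (e k) \<le> L1 (e 0) + W * (\<Sum>j<k. \<rho> ^ j)" for k
    proof (induction k)
      case 0 then show ?case by simp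
    next
      case (Suc k)
      then show ?case using step[of k] by (simp add: algebra_simps)
    qed
    have "(\<Sum>j<k. \<rho> ^ j) \<le> 1 / (1 - \<rho>)"
    proof -
      have "(\<Sum>j<k. \<rho> ^ j) = (1 - \<rho> ^ k) / (1 - \<rho>)" using rho by (simp add: sum_gp_strict)
      also have "\<dots> \<le> 1 / (1 - \<rho>)" using rho by (simp add: divide_right_mono)
      finally show ?thesis .
    qed
    then have "W * (\<Sum>j<k. \<rho> ^ j) \<le> W * (1 / (1 - \<rho>))" using W0 by (rule mult_left_mono)
    moreover have "L1 (?y 0) \<le> s * L1 (e 0)"
    proof -
      have "L1 (?y 0) = (\<Sum>j<s. \<bar>?y 0 $ j\<bar>)" unfolding L1_def by (subst carrier_vecD[OF yc[of 0]]) (rule refl)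
      also have "\<dots> \<le> (\<Sum>j<s. L1 (e 0))"
      proof (rule sum_mono)
        fix j assume "j \<in> {..<s}"
        then have j: "j < s" by simp
        have "?y 0 $ j = e 0 $ (Ls ! j - 1)" unfolding P_def using gmatT_mult[OF ec j Ls[OF j]] by simp
        moreover have "Ls ! j - 1 < dim_vec (e 0)" using Ls[OF j] ec[of 0] by auto
        ultimately show "\<bar>?y 0 $ j\<bar> \<le> L1 (e 0)" using comp_le_L1 by simp
      qed
      finally show ?thesis by simp
    qed
    then have "W \<le> m * mabs M * (s * (s * L1 (e 0)))" unfolding W_def
      by (intro mult_left_mono) (auto simp: mabs_nonneg)
    then have "W * (1 / (1 - \<rho>)) \<le> m * mabs M * (s * (s * L1 (e 0))) * (1 / (1 - \<rho>))"
      using rho by (intro mult_right_mono) auto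
    ultimately have "L1 (e k) \<le> L1 (e 0) + m * mabs M * (s * (s * L1 (e 0))) * (1 / (1 - \<rho>))"
      using gs[of k] by linarith
    then show ?thesis unfolding K_def by (simp add: algebra_simps)
  qed
  have part2: "lyapunov_stable m Full"
    unfolding lyapunov_stable_def
  proof (intro allI impI)
    fix \<epsilon> :: real assume eps: "\<epsilon> > 0"
    have Km: "0 < K * m" using K1 m by simp
    show "\<exists>\<delta>>0. \<forall>z. is_traj m Full z \<longrightarrow> vnorm (z 0) < \<delta> \<longrightarrow> (\<forall>k. vnorm (z k) < \<epsilon>)"
    proof (intro exI[of _ "\<epsilon> / (K * m)"] conjI allI impI)
      show "0 < \<epsilon> / (K * m)" using eps Km by simp
      fix z k assume z: "is_traj m Full z" and z0: "vnorm (z 0) < \<epsilon> / (K * m)"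
      have dz: "dim_vec (z 0) = m" using z unfolding is_traj_def by auto
      have "vnorm (z k) \<le> L1 (z k)" by (rule vnorm_le_L1)
      also have "\<dots> \<le> K * L1 (z 0)" by (rule bound[OF z])
      also have "\<dots> \<le> K * (m * vnorm (z 0))" using L1_le_vnorm[of "z 0"] dz K1 by simp
      also have "\<dots> < K * (m * (\<epsilon> / (K * m)))" using z0 K1 m by (intro mult_strict_left_mono) auto
      also have "\<dots> = \<epsilon>" using K1 m by simp
      finally show "vnorm (z k) < \<epsilon>" .
    qed
  qed
  show ?thesis using part1 part2 part3 unfolding Full_def A_def H_def by blast
qed



lemma Gamma_gmat: "Gamma c \<Omega> = gmat c (sorted_list_of_set \<Omega>) (card \<Omega>)"
  unfolding Gamma_def gmat_def by simp

lemma gmat_carrier: "gmat c L k \<in> carrier_mat c k" unfolding gmat_def by simp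

lemma hcat_gmat: "length Xs = a \<Longrightarrow> hcat (gmat c Xs a) (gmat c Ys b) = gmat c (Xs @ Ys) (a + b)"
  unfolding hcat_def gmat_def by (intro eq_matI) (auto simp: nth_append)

lemma gmat_orth:
  assumes d: "distinct L" and l: "length L = k" and s: "set L \<subseteq> {1..c}"
  shows "transpose_mat (gmat c L k) * gmat c L k = 1\<^sub>m k"
proof (rule eq_matI)
  fix i j assume i: "i < dim_row (1\<^sub>m k)" and j: "j < dim_col (1\<^sub>m k)"
  then have i: "i < k" and j: "j < k" by auto
  have Li: "L ! i \<in> {1..c}" using s i l nth_mem by blast
  have "(transpose_mat (gmat c L k) * gmat c L k) $$ (i,j) =
     (\<Sum>t\<in>{0..<c}. (if t + 1 = L ! i then 1 else 0) * (if t + 1 = L ! j then 1 else 0))"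
    using i j by (simp add: gmat_def scalar_prod_def)
  also have "\<dots> = (\<Sum>t\<in>{0..<c}. if t = L ! i - 1 then (if L ! i = L ! j then 1 else 0) else 0)"
    by (rule sum.cong) (use Li in auto)
  also have "\<dots> = (if L ! i = L ! j then 1 else 0)" using Li by (auto simp: sum.delta')
  also have "\<dots> = 1\<^sub>m k $$ (i,j)" using d i j l by (simp add: nth_eq_iff_index_eq)
  finally show "(transpose_mat (gmat c L k) * gmat c L k) $$ (i,j) = 1\<^sub>m k $$ (i,j)" .
qed (auto simp: gmat_def)

lemma gmat_select:
  assumes k: "k \<le> m"
  shows "gmat c L m * gmat m [1..<k+1] k = gmat c L k"
proof (rule eq_matI)
  fix i j assume "i < dim_row (gmat c L k)" "j < dim_col (gmat c L k)"
  then have i: "i < c" and j: "j < k" by (auto simp: gmat_def)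
  have "(gmat c L m * gmat m [1..<k+1] k) $$ (i,j) =
     (\<Sum>t\<in>{0..<m}. (if i + 1 = L ! t then 1 else 0) * (if t + 1 = [1..<k+1] ! j then 1 else 0))"
    using i j by (simp add: gmat_def scalar_prod_def)
  also have "\<dots> = (\<Sum>t\<in>{0..<m}. if t = j then (if i + 1 = L ! j then 1 else 0) else 0)"
    by (rule sum.cong) (use j nth_upt[of 1 j "k+1"] in \<open>auto simp del: upt_Suc\<close>)
  also have "\<dots> = gmat c L k $$ (i,j)" using i j k by (simp add: gmat_def)
  finally show "(gmat c L m * gmat m [1..<k+1] k) $$ (i,j) = gmat c L k $$ (i,j)" .
qed (auto simp: gmat_def)

lemma gmat_prefix:
  assumes "\<And>j. j < k \<Longrightarrow> L ! j = L' ! j"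
  shows "gmat c L k = gmat c L' k"
  unfolding gmat_def using assms by (intro eq_matI) auto

lemma inverse_perm:
  fixes T :: "real mat"
  assumes T: "T \<in> carrier_mat N N" and TT: "transpose_mat T * T = 1\<^sub>m N"
  shows "the (mat_inverse T) = transpose_mat T"
proof -
  have TT': "T * transpose_mat T = 1\<^sub>m N"
    by (rule mat_mult_left_right_inverse[OF _ T TT]) (use T in simp)
  have U: "T \<in> Units (ring_mat TYPE(real) N undefined)"
    unfolding Units_def using T TT TT' by (auto simp: ring_mat_simps intro!: bexI[of _ "transpose_mat T"])
  obtain X where X: "mat_inverse T = Some X"
    using mat_inverse(1)[OF T, of undefined] U by (cases "mat_inverse T") auto
  from mat_inverse(2)[OF T X] have XT: "X * T = 1\<^sub>m N" and Xc: "X \<in> carrier_mat N N" by auto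
  have "X = X * (T * transpose_mat T)" using TT' Xc by simp
  also have "\<dots> = (X * T) * transpose_mat T" using Xc T by (simp add: assoc_mult_mat[of _ N N _ N _ N])
  also have "\<dots> = transpose_mat T" using XT T by simp
  finally show ?thesis using X by simp
qed



theorem theorem3:
  fixes n :: nat and par :: "nat \<Rightarrow> nat" and r x :: "nat \<Rightarrow> nat \<Rightarrow> real"
    and D1 S1 :: "nat set" and F :: "real mat"
  assumes n: "n \<ge> 1"
    and tree: "is_rooted_tree n par"
    and D1: "D1 \<subseteq> {1..n}" "D1 \<noteq> {}"
    and S1: "S1 \<subseteq> {1..n}" "S1 \<noteq> {}"
    and SD: "Dset n S1 \<subseteq> Dset n D1"
    and F: "F \<in> carrier_mat (card (Dset n D1)) (card (Dset n S1))"
    and diag: "\<forall>i < card (Dset n S1).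
       (let Hb = Bbar n par r x D1 S1 * (F * Cbar n D1 S1);
            \<gamma> = (\<Sum>j\<in>{0..<card (Dset n S1)} - {i}. \<bar>Hb $$ (i,j)\<bar>)
        in Hb $$ (i,i) + \<gamma> < 2 \<and> Hb $$ (i,i) - \<gamma> > 0)"
  shows
    "(\<forall>eb. is_traj (card (Dset n S1))
              (1\<^sub>m (card (Dset n S1)) - Bbar n par r x D1 S1 * (F * Cbar n D1 S1)) eb
            \<longrightarrow> exp_conv_zero (\<lambda>k. vnorm (eb k)))
     \<and> lyapunov_stable (2*n) (1\<^sub>m (2*n) - Bmat n par r x D1 * F * Cmat n S1)
     \<and> (\<forall>e. is_traj (2*n) (1\<^sub>m (2*n) - Bmat n par r x D1 * F * Cmat n S1) e
            \<longrightarrow> (\<forall>p \<in> Dset n S1. exp_conv_zero (\<lambda>k. e k $ (p - 1))))"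
proof -
  define S where "S = Dset n S1"
  define D where "D = Dset n D1"
  define U where "U = {1..2*n}"
  define s where "s = card S"
  define d where "d = card D"
  define sl where "sl = (sorted_list_of_set :: nat set \<Rightarrow> nat list)"
  have finU: "finite U" unfolding U_def by simp
  have SU: "S \<subseteq> U" unfolding S_def U_def Dset_def shiftn_def using S1 by auto
  have DU: "D \<subseteq> U" unfolding D_def U_def Dset_def shiftn_def using D1 by auto
  have finS: "finite S" using finite_subset[OF SU finU] .
  have finD: "finite D" using finite_subset[OF DU finU] .
  have SDi: "S \<inter> D = S" using SD unfolding S_def D_def by auto
  have cardU: "card U = 2 * n" unfolding U_def by simp
  have sle: "s \<le> 2 * n" unfolding s_def using card_mono[OF finU SU] cardU by simp
  have spos: "0 < s" unfolding s_def S_def Dset_def using S1 finS[unfolded S_def Dset_def]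
    by (auto simp: card_gt_0_iff)
  have slS: "set (sl X) = X" "length (sl X) = card X" "distinct (sl X)" if "finite X" for X
    unfolding sl_def using that by auto
  define Lall where "Lall = sl (S \<inter> D) @ sl (S \<inter> (U - D)) @ sl ((U - S) \<inter> D) @ sl ((U - S) \<inter> (U - D))"
  have fins: "finite (S \<inter> D)" "finite (S \<inter> (U - D))" "finite ((U - S) \<inter> D)" "finite ((U - S) \<inter> (U - D))"
    using finS finU by auto
  have setL: "set Lall = U" unfolding Lall_def using slS(1)[OF fins(1)] slS(1)[OF fins(2)]
      slS(1)[OF fins(3)] slS(1)[OF fins(4)] SU DU by auto
  have distL: "distinct Lall" unfolding Lall_def using slS[OF fins(1)] slS[OF fins(2)]
      slS[OF fins(3)] slS[OF fins(4)] by auto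
  have lenL: "length Lall = 2 * n" using distinct_card[OF distL] setL cardU by simp
  define T where "T = Tmat n D1 S1"
  have T_eq: "T = gmat (2*n) Lall (2*n)"
  proof -
    have "T = gmat (2*n) Lall (length Lall)"
      unfolding T_def Tmat_def Let_def Gamma_gmat S_def[symmetric] D_def[symmetric] U_def[symmetric]
      unfolding sl_def[symmetric] Lall_def
      by (simp add: hcat_gmat slS fins)
    then show ?thesis using lenL by simp
  qed
  have Tc: "T \<in> carrier_mat (2*n) (2*n)" unfolding T_eq by (rule gmat_carrier)
  have TT: "transpose_mat T * T = 1\<^sub>m (2*n)" unfolding T_eq
    by (rule gmat_orth[OF distL lenL]) (use setL U_def in simp)
  have Tinv: "the (mat_inverse T) = transpose_mat T" by (rule inverse_perm[OF Tc TT])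
  define P where "P = gmat (2*n) (sl S) s"
  have Pc: "P \<in> carrier_mat (2*n) s" unfolding P_def by (rule gmat_carrier)
  have G_eq: "Gmat n S1 = gmat (2*n) [1..<s+1] s"
  proof -
    have "{1..s} = {1..<s+1}" by auto
    then have "sorted_list_of_set {1..s} = [1..<s+1]" by (simp del: upt_Suc)
    then show ?thesis unfolding Gmat_def Gamma_gmat S_def[symmetric] s_def[symmetric] by simp
  qed
  have Gc: "Gmat n S1 \<in> carrier_mat (2*n) s" unfolding G_eq by (rule gmat_carrier)
  have TG: "T * Gmat n S1 = P"
  proof -
    have "T * Gmat n S1 = gmat (2*n) Lall s" unfolding T_eq G_eq by (rule gmat_select[OF sle])
    also have "\<dots> = P" unfolding P_def
    proof (rule gmat_prefix)
      fix j assume "j < s"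
      moreover have "length (sl (S \<inter> D)) = s" using slS(2)[OF fins(1)] SDi s_def by simp
      ultimately show "Lall ! j = sl S ! j" unfolding Lall_def using SDi by (simp add: nth_append)
    qed
    finally show ?thesis .
  qed
  have PTP: "transpose_mat P * P = 1\<^sub>m s" unfolding P_def
    by (rule gmat_orth) (use slS[OF finS] s_def SU U_def in auto)
  have Cm: "Cmat n S1 = transpose_mat P"
    unfolding Cmat_def Gamma_gmat S_def[symmetric] P_def sl_def s_def ..
  define B where "B = Bmat n par r x D1"
  have cardD: "d = card D1 + card D1"
  proof -
    have fD1: "finite D1" using D1(1) finite_subset by blast
    have "card (shiftn n D1) = card D1" unfolding shiftn_def by (rule card_image) (simp add: inj_on_def)
    moreover have "D1 \<inter> shiftn n D1 = {}"
    proof (rule ccontr)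
      assume "D1 \<inter> shiftn n D1 \<noteq> {}"
      then obtain i where "i \<in> D1" "i + n \<in> D1" unfolding shiftn_def by auto
      then have "1 \<le> i" "i + n \<le> n" using D1(1) by (auto dest: subsetD)
      then show False by simp
    qed
    ultimately show ?thesis unfolding d_def D_def Dset_def
      using card_Un_disjoint[OF fD1 _ ] fD1 by (simp add: shiftn_def)
  qed
  have Bc: "B \<in> carrier_mat (2*n) d"
  proof -
    have R0c: "R0 n par q \<in> carrier_mat n n" for q unfolding R0_def by simp
    have Tdc: "Gamma n D1 \<in> carrier_mat n (card D1)" unfolding Gamma_def by simp
    have "B \<in> carrier_mat (n + n) (card D1 + card D1)" unfolding B_def Bmat_def Let_def
      by (rule four_block_carrier_mat) (rule mult_carrier_mat[OF R0c Tdc], rule smult_carrier_mat, rule mult_carrier_mat[OF R0c Tdc])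
    then show ?thesis using cardD by (simp add: mult_2)
  qed
  have Fc: "F \<in> carrier_mat d s" using F unfolding d_def s_def D_def S_def .
  define M where "M = B * F"
  have Mc: "M \<in> carrier_mat (2*n) s" unfolding M_def using Bc Fc by simp
  have Cb: "Cbar n D1 S1 = 1\<^sub>m s"
  proof -
    have "Cbar n D1 S1 = transpose_mat P * T * Gmat n S1" unfolding Cbar_def Cm T_def ..
    also have "\<dots> = transpose_mat P * (T * Gmat n S1)"
      by (rule assoc_mult_mat[of _ s "2*n" _ "2*n" _ s]) (use Pc Tc Gc in auto)
    finally show ?thesis using TG PTP by simp
  qed
  have Bb: "Bbar n par r x D1 S1 = transpose_mat P * B"
  proof -
    have "Bbar n par r x D1 S1 = transpose_mat (Gmat n S1) * transpose_mat T * B"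
      unfolding Bbar_def Tinv[unfolded T_def] T_def B_def ..
    also have "transpose_mat (Gmat n S1) * transpose_mat T = transpose_mat (T * Gmat n S1)"
      by (rule transpose_mult[symmetric, OF Tc Gc])
    finally show ?thesis using TG by simp
  qed
  have Hb: "Bbar n par r x D1 S1 * (F * Cbar n D1 S1) = transpose_mat P * M"
  proof -
    have "Bbar n par r x D1 S1 * (F * Cbar n D1 S1) = transpose_mat P * B * F"
      unfolding Bb Cb using Fc by simp
    also have "\<dots> = transpose_mat P * M" unfolding M_def
      by (rule assoc_mult_mat[of _ s "2*n" _ d _ s]) (use Pc Bc Fc in auto)
    finally show ?thesis .
  qed
  have Full: "Bmat n par r x D1 * F * Cmat n S1 = M * transpose_mat P"
    unfolding Cm M_def B_def ..
  have Ls: "sl S ! j \<in> {1..2*n}" if "j < s" for j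
  proof -
    have "sl S ! j \<in> set (sl S)" using that slS(2)[OF finS] s_def by (intro nth_mem) simp
    then show ?thesis using slS(1)[OF finS] SU U_def by auto
  qed
  have c: "\<forall>i<s. (transpose_mat P * M) $$ (i,i) + (\<Sum>j\<in>{0..<s} - {i}. \<bar>(transpose_mat P * M) $$ (i,j)\<bar>) < 2 \<and>
           (transpose_mat P * M) $$ (i,i) - (\<Sum>j\<in>{0..<s} - {i}. \<bar>(transpose_mat P * M) $$ (i,j)\<bar>) > 0"
    using diag unfolding Hb Let_def S_def[symmetric] s_def[symmetric] .
  have m0: "0 < 2 * n" using n by simp
  have core': "(\<forall>eb. is_traj s (1\<^sub>m s - transpose_mat P * M) eb \<longrightarrow> exp_conv_zero (\<lambda>k. vnorm (eb k)))
     \<and> lyapunov_stable (2*n) (1\<^sub>m (2*n) - M * transpose_mat P)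
     \<and> (\<forall>e. is_traj (2*n) (1\<^sub>m (2*n) - M * transpose_mat P) e
            \<longrightarrow> (\<forall>j<s. exp_conv_zero (\<lambda>k. e k $ (sl S ! j - 1))))"
    using core[OF Mc spos m0 Ls c[unfolded P_def]] unfolding P_def .
  have p3: "\<forall>e. is_traj (2*n) (1\<^sub>m (2*n) - M * transpose_mat P) e
            \<longrightarrow> (\<forall>p \<in> S. exp_conv_zero (\<lambda>k. e k $ (p - 1)))"
  proof (intro allI impI ballI)
    fix e p assume e: "is_traj (2*n) (1\<^sub>m (2*n) - M * transpose_mat P) e" and p: "p \<in> S"
    have "p \<in> set (sl S)" using p slS(1)[OF finS] by simp
    then obtain j where j: "j < length (sl S)" "sl S ! j = p" by (auto simp: in_set_conv_nth)
    have js: "j < s" using j(1) slS(2)[OF finS] s_def by simp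
    have "\<forall>j<s. exp_conv_zero (\<lambda>k. e k $ (sl S ! j - 1))" using core' e by simp
    then show "exp_conv_zero (\<lambda>k. e k $ (p - 1))" using js j(2) by blast
  qed
  show ?thesis using core' p3 unfolding Hb Full S_def[symmetric] s_def[symmetric] by blast
qed

end
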